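(* Let $\varphi\colon (A,m,K)\to (B,n,L)$ be a basically regular local homomorphism of noetherian local rings. (1) Assume that $mB\neq n$ and let $I\subseteq m^2$ be an ideal of $A$. Then the induced map $\varphi_{I,n^2}\colon A/I\to B/n^2$ is basically regular, while its closed fibre ring $\dfrac{B/n^2}{(m/I)(B/n^2)}$ is not regular. (2) Assume that $A$ is not artinian. Then the composition $\pi_{n^2}\circ\varphi\colon A\to B/n^2$ (with $\pi_{n^2}\colon B\to B/n^2$ the canonical surjection) is basically regular and not flat. If moreover $mB\neq n$, then the fibre ring $\dfrac{B/n^2}{m(B/n^2)}$ is not regular.
   Context: All rings are commutative and noetherian with identity; ring homomorphisms are unital. A local homomorphism $\varphi\colon (A,m,K)\to(B,n,L)$ is a ring homomorphism between local rings with $\varphi(m)\subseteq n$. The map $\varphi$ is called basically regular if for every minimal basis (minimal generating set) $x_1,\dots,x_r$ of $m$, the elements $\varphi(x_1),\dots,\varphi(x_r)$ are part of a minimal basis of $n$ (vacuously true if $A$ is a field). *)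

theory Defs
  imports "HOL-Algebra.Algebra" "HOL-Library.Extended_Nat"
begin

definition local_ring :: "('a, 'c) ring_scheme \<Rightarrow> bool" where
  "local_ring R \<longleftrightarrow> cring R \<and> (\<exists>!m. maximalideal m R)"

definition locmax :: "('a, 'c) ring_scheme \<Rightarrow> 'a set" where
  "locmax R = (THE m. maximalideal m R)"

definition noetherian_local_ring :: "('a, 'c) ring_scheme \<Rightarrow> bool" where
  "noetherian_local_ring R \<longleftrightarrow> noetherian_ring R \<and> local_ring R"

definition minimal_basis :: "('a, 'c) ring_scheme \<Rightarrow> 'a set \<Rightarrow> 'a list \<Rightarrow> bool" where
  "minimal_basis R J xs \<longleftrightarrow>
     set xs \<subseteq> carrier R \<and> genideal R (set xs) = J \<and>
     (\<forall>i < length xs. genideal R (set (take i xs @ drop (Suc i) xs)) \<noteq> J)"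

definition local_hom ::
  "('a, 'c) ring_scheme \<Rightarrow> ('b, 'd) ring_scheme \<Rightarrow> ('a \<Rightarrow> 'b) \<Rightarrow> bool" where
  "local_hom R S f \<longleftrightarrow> local_ring R \<and> local_ring S \<and> f \<in> ring_hom R S \<and>
     f ` locmax R \<subseteq> locmax S"

definition basically_regular ::
  "('a, 'c) ring_scheme \<Rightarrow> ('b, 'd) ring_scheme \<Rightarrow> ('a \<Rightarrow> 'b) \<Rightarrow> bool" where
  "basically_regular R S f \<longleftrightarrow>
     noetherian_local_ring R \<and> noetherian_local_ring S \<and> local_hom R S f \<and>
     (\<forall>xs. minimal_basis R (locmax R) xs \<longrightarrow>
        (\<exists>ys. minimal_basis S (locmax S) (map f xs @ ys)))"

definition krull_dim :: "('a, 'c) ring_scheme \<Rightarrow> enat" where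
  "krull_dim R = Sup {enat n | n. \<exists>P :: nat \<Rightarrow> 'a set.
      (\<forall>i \<le> n. primeideal (P i) R) \<and> (\<forall>i < n. P i \<subset> P (Suc i))}"

definition regular_local_ring :: "('a, 'c) ring_scheme \<Rightarrow> bool" where
  "regular_local_ring R \<longleftrightarrow> noetherian_local_ring R \<and>
     (\<exists>xs. minimal_basis R (locmax R) xs \<and> krull_dim R = enat (length xs))"

definition artinian :: "('a, 'c) ring_scheme \<Rightarrow> bool" where
  "artinian R \<longleftrightarrow> ring R \<and> (\<forall>I :: nat \<Rightarrow> 'a set.
     (\<forall>k. ideal (I k) R) \<and> (\<forall>k. I (Suc k) \<subseteq> I k) \<longrightarrow> (\<exists>N. \<forall>k \<ge> N. I k = I N))"

(* flatness of S as an R-module via f, by the equational criterion *)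
definition flat_hom ::
  "('a, 'c) ring_scheme \<Rightarrow> ('b, 'd) ring_scheme \<Rightarrow> ('a \<Rightarrow> 'b) \<Rightarrow> bool" where
  "flat_hom R S f \<longleftrightarrow>
    (\<forall>(k::nat) (a :: nat \<Rightarrow> 'a) (b :: nat \<Rightarrow> 'b).
       (\<forall>i < k. a i \<in> carrier R \<and> b i \<in> carrier S) \<and>
       finsum S (\<lambda>i. f (a i) \<otimes>\<^bsub>S\<^esub> b i) {..<k} = \<zero>\<^bsub>S\<^esub> \<longrightarrow>
       (\<exists>(l::nat) (c :: nat \<Rightarrow> nat \<Rightarrow> 'a) (y :: nat \<Rightarrow> 'b).
          (\<forall>i < k. \<forall>j < l. c i j \<in> carrier R) \<and> (\<forall>j < l. y j \<in> carrier S) \<and>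
          (\<forall>i < k. b i = finsum S (\<lambda>j. f (c i j) \<otimes>\<^bsub>S\<^esub> y j) {..<l}) \<and>
          (\<forall>j < l. finsum R (\<lambda>i. a i \<otimes>\<^bsub>R\<^esub> c i j) {..<k} = \<zero>\<^bsub>R\<^esub>)))"

definition fibre_ring ::
  "('a, 'c) ring_scheme \<Rightarrow> ('b, 'd) ring_scheme \<Rightarrow> ('a \<Rightarrow> 'b) \<Rightarrow> 'b set ring" where
  "fibre_ring R S f = S Quot (genideal S (f ` locmax R))"

definition quot_proj :: "('b, 'd) ring_scheme \<Rightarrow> 'b set \<Rightarrow> 'b \<Rightarrow> 'b set" where
  "quot_proj S J = (\<lambda>b. J +>\<^bsub>S\<^esub> b)"

definition induced_hom ::
  "('a, 'c) ring_scheme \<Rightarrow> ('b, 'd) ring_scheme \<Rightarrow> ('a \<Rightarrow> 'b) \<Rightarrow> 'a set \<Rightarrow> 'b set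
     \<Rightarrow> 'a set \<Rightarrow> 'b set" where
  "induced_hom R S f I J = (\<lambda>C. a_r_coset S J (f (SOME a. a \<in> C)))"

end

theory Submission
  imports Defs
begin
lemma (in cring) exists_maximal:
  assumes "ideal J R" "\<one> \<notin> J"
  shows "\<exists>M. maximalideal M R \<and> J \<subseteq> M"
proof -
  define A where "A = {I. ideal I R \<and> J \<subseteq> I \<and> \<one> \<notin> I}"
  have "\<exists>M\<in>A. \<forall>Y\<in>A. M \<subseteq> Y \<longrightarrow> Y = M"
  proof (rule subset_Zorn_nonempty)
    show "A \<noteq> {}" using assms unfolding A_def by blast
    fix C assume C: "C \<noteq> {}" "subset.chain A C"
    have "subset.chain {I. ideal I R} C" using C(2) unfolding pred_on.chain_def A_def by blast
    hence idC: "ideal (\<Union>C) R" using chain_Union_is_ideal[of C] C(1) by simp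
    have CA: "C \<subseteq> A" using C(2) unfolding pred_on.chain_def by simp
    obtain I0 where "I0 \<in> C" using C(1) by blast
    hence J1: "J \<subseteq> \<Union>C" using CA unfolding A_def by blast
    have J2: "\<one> \<notin> \<Union>C" using CA unfolding A_def by blast
    show "\<Union>C \<in> A" unfolding A_def using idC J1 J2 by simp
  qed
  then obtain M where M: "M \<in> A" "\<And>Y. Y \<in> A \<Longrightarrow> M \<subseteq> Y \<Longrightarrow> Y = M"
    by blast
  have M1: "ideal M R" "J \<subseteq> M" "\<one> \<notin> M" using M(1) unfolding A_def by auto
  have "maximalideal M R"
  proof (rule maximalidealI)
    show "ideal M R" by fact
    show "carrier R \<noteq> M" using M1(3) by auto
    fix K assume K: "ideal K R" "M \<subseteq> K" "K \<subseteq> carrier R"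
    show "K = M \<or> K = carrier R"
    proof (cases "\<one> \<in> K")
      case True thus ?thesis using ideal.one_imp_carrier[OF K(1)] by simp
    next
      case False
      hence "K \<in> A" unfolding A_def using K M1 by simp
      thus ?thesis using M(2) K(2) by simp
    qed
  qed
  thus ?thesis using M1 by blast
qed

lemma local_ring_cring: "local_ring R \<Longrightarrow> cring R"
  unfolding local_ring_def by blast

lemma local_max: "local_ring R \<Longrightarrow> maximalideal (locmax R) R"
  unfolding local_ring_def locmax_def by (rule theI', simp)

lemma local_max_unique: "local_ring R \<Longrightarrow> maximalideal M R \<Longrightarrow> M = locmax R"
  unfolding local_ring_def locmax_def by (rule the1_equality[symmetric]) simp_all

lemma local_ideal: "local_ring R \<Longrightarrow> ideal (locmax R) R"
  using local_max maximalideal.axioms(1) by blast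

lemma local_one_notin: "local_ring R \<Longrightarrow> \<one>\<^bsub>R\<^esub> \<notin> locmax R"
proof
  assume "local_ring R" "\<one>\<^bsub>R\<^esub> \<in> locmax R"
  hence "locmax R = carrier R" using ideal.one_imp_carrier local_ideal by blast
  thus False using maximalideal.I_notcarr local_max \<open>local_ring R\<close> by metis
qed

lemma local_carr: "local_ring R \<Longrightarrow> locmax R \<subseteq> carrier R"
proof
  fix x assume "local_ring R" "x \<in> locmax R"
  thus "x \<in> carrier R" by (rule ideal.Icarr[OF local_ideal])
qed

lemma (in cring) local_proper_sub:
  assumes "local_ring R" "ideal J R" "\<one> \<notin> J"
  shows "J \<subseteq> locmax R"
proof -
  obtain M where M: "maximalideal M R" "J \<subseteq> M" using exists_maximal[OF assms(2,3)] by blast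
  have "M = locmax R" by (rule local_max_unique[OF assms(1) M(1)])
  thus ?thesis using M(2) by simp
qed

lemma (in cring) local_unit:
  assumes "local_ring R" "a \<in> carrier R" "a \<notin> locmax R"
  shows "a \<in> Units R"
proof -
  have "\<one> \<in> PIdl a"
  proof (rule ccontr)
    assume "\<one> \<notin> PIdl a"
    hence "PIdl a \<subseteq> locmax R" using local_proper_sub[OF assms(1) cgenideal_ideal[OF assms(2)]] by simp
    thus False using cgenideal_self[OF assms(2)] assms(3) by blast
  qed
  then obtain x where x: "x \<in> carrier R" "\<one> = x \<otimes> a" unfolding cgenideal_def by blast
  have "a \<otimes> x = \<one>" using x assms(2) m_comm by simp
  thus ?thesis using x assms(2) unfolding Units_def by force
qed

lemma (in cring) ideal_unit_one:
  assumes "ideal I R" "a \<in> I" "a \<in> Units R"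
  shows "\<one> \<in> I"
proof -
  have "inv a \<in> carrier R" using assms(3) by simp
  hence "inv a \<otimes> a \<in> I" by (rule ideal.I_l_closed[OF assms(1) assms(2)])
  thus ?thesis using assms(3) by simp
qed

lemma (in cring) local_nonunit:
  assumes "local_ring R" "a \<in> locmax R"
  shows "a \<notin> Units R"
proof
  assume "a \<in> Units R"
  hence "\<one> \<in> locmax R" by (rule ideal_unit_one[OF local_ideal[OF assms(1)] assms(2)])
  thus False using local_one_notin[OF assms(1)] by simp
qed

lemma (in cring) local_ringI:
  assumes "ideal m R" "\<one> \<notin> m" "\<And>a. a \<in> carrier R \<Longrightarrow> a \<notin> m \<Longrightarrow> a \<in> Units R"
  shows "local_ring R \<and> locmax R = m"
proof -
  have mm: "maximalideal m R"
  proof (rule maximalidealI)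
    show "ideal m R" by fact
    show "carrier R \<noteq> m" using assms(2) by auto
    fix J assume J: "ideal J R" "m \<subseteq> J" "J \<subseteq> carrier R"
    show "J = m \<or> J = carrier R"
    proof (cases "\<one> \<in> J")
      case True thus ?thesis using ideal.one_imp_carrier[OF J(1)] by simp
    next
      case False
      have "J \<subseteq> m"
      proof
        fix a assume "a \<in> J"
        thus "a \<in> m" using ideal_unit_one[OF J(1)] False assms(3) J(3) by blast
      qed
      thus ?thesis using J by simp
    qed
  qed
  have uq: "M = m" if "maximalideal M R" for M
  proof -
    have iM: "ideal M R" using that maximalideal.axioms(1) by blast
    have "\<one> \<notin> M" using that maximalideal.I_notcarr ideal.one_imp_carrier[OF iM] by metis
    have "M \<subseteq> m"
    proof
      fix a assume "a \<in> M"
      thus "a \<in> m" using ideal_unit_one[OF iM] \<open>\<one> \<notin> M\<close> assms(3) ideal.Icarr[OF iM] by blast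
    qed
    have "m \<subseteq> carrier R" using ideal.Icarr[OF assms(1)] by blast
    hence "m = M \<or> m = carrier R" using maximalideal.I_maximal[OF that assms(1) \<open>M \<subseteq> m\<close>] by simp
    thus ?thesis using assms(2) by auto
  qed
  have "local_ring R" unfolding local_ring_def using mm uq is_cring by blast
  thus ?thesis using local_max_unique mm by metis
qed

lemma (in cring) local_one_minus_unit:
  assumes "local_ring R" "a \<in> locmax R"
  shows "\<one> \<ominus> a \<in> Units R"
proof (rule local_unit[OF assms(1)])
  have ac: "a \<in> carrier R" using assms local_carr by blast
  thus "\<one> \<ominus> a \<in> carrier R" by simp
  show "\<one> \<ominus> a \<notin> locmax R"
  proof
    assume "\<one> \<ominus> a \<in> locmax R"
    hence "(\<one> \<ominus> a) \<oplus> a \<in> locmax R"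
      using assms additive_subgroup.a_closed[OF ideal.axioms(1)[OF local_ideal[OF assms(1)]]] by blast
    moreover have "(\<one> \<ominus> a) \<oplus> a = \<one>" using ac by algebra
    ultimately show False using local_one_notin[OF assms(1)] by simp
  qed
qed

lemma (in cring) quot_cring: "ideal K R \<Longrightarrow> cring (R Quot K)"
  using ideal.quotient_is_cring is_cring by blast

lemma (in cring) quot_hom: "ideal K R \<Longrightarrow> ((+>) K) \<in> ring_hom R (R Quot K)"
  using ideal.rcos_ring_hom by blast

lemma (in cring) quot_elem: "ideal K R \<Longrightarrow> C \<in> carrier (R Quot K) \<Longrightarrow> \<exists>a\<in>carrier R. C = K +> a"
  unfolding FactRing_def A_RCOSETS_def' by auto

lemma (in cring) quot_in: "ideal K R \<Longrightarrow> a \<in> carrier R \<Longrightarrow> K +> a \<in> carrier (R Quot K)"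
  unfolding FactRing_def A_RCOSETS_def' by auto

lemma (in cring) quot_zero: "\<zero>\<^bsub>R Quot K\<^esub> = K"
  unfolding FactRing_def by simp

lemma (in cring) quot_one: "\<one>\<^bsub>R Quot K\<^esub> = K +> \<one>"
  unfolding FactRing_def by simp

lemma (in cring) quot_add: "ideal K R \<Longrightarrow> a \<in> carrier R \<Longrightarrow> b \<in> carrier R \<Longrightarrow>
   (K +> a) \<oplus>\<^bsub>R Quot K\<^esub> (K +> b) = K +> (a \<oplus> b)"
  using ring_hom_add[OF quot_hom] by metis

lemma (in cring) quot_mult: "ideal K R \<Longrightarrow> a \<in> carrier R \<Longrightarrow> b \<in> carrier R \<Longrightarrow>
   (K +> a) \<otimes>\<^bsub>R Quot K\<^esub> (K +> b) = K +> (a \<otimes> b)"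
  using ring_hom_mult[OF quot_hom] by metis

lemma (in cring) quot_eq_iff: "ideal K R \<Longrightarrow> a \<in> carrier R \<Longrightarrow> b \<in> carrier R \<Longrightarrow>
   (K +> a = K +> b) \<longleftrightarrow> a \<ominus> b \<in> K"
  using quotient_eq_iff_same_a_r_cos by blast

lemma (in cring) quot_eq_zero_iff: "ideal K R \<Longrightarrow> a \<in> carrier R \<Longrightarrow> (K +> a = K) \<longleftrightarrow> a \<in> K"
proof
  assume "ideal K R" "a \<in> carrier R" "K +> a = K"
  thus "a \<in> K" by (rule ideal.rcos_const_imp_mem)
next
  assume "ideal K R" "a \<in> K"
  thus "K +> a = K" by (rule a_rcos_zero)
qed

lemma (in cring) quot_rep:
  assumes "ideal K R" "C \<in> carrier (R Quot K)"
  shows "(SOME a. a \<in> C) \<in> carrier R \<and> K +> (SOME a. a \<in> C) = C"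
proof -
  obtain a where a: "a \<in> carrier R" "C = K +> a" using quot_elem assms by blast
  have sg: "subgroup K (add_monoid R)" by (rule additive_subgroup.a_subgroup[OF ideal.axioms(1)[OF assms(1)]])
  have Kc: "K \<subseteq> carrier R" by (rule additive_subgroup.a_subset[OF ideal.axioms(1)[OF assms(1)]])
  have "\<zero> \<in> K" by (rule additive_subgroup.zero_closed[OF ideal.axioms(1)[OF assms(1)]])
  hence "\<zero> \<oplus> a \<in> K +> a" by (rule a_rcosI[OF _ Kc a(1)])
  hence "\<zero> \<oplus> a \<in> C" using a(2) by simp
  hence "\<exists>b. b \<in> C" by (rule exI)
  hence s: "(SOME b. b \<in> C) \<in> C" by (rule someI_ex)
  have "K +> a \<subseteq> carrier R" by (rule a_r_coset_subset_G[OF Kc a(1)])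
  hence "(SOME b. b \<in> C) \<in> carrier R" using s a(2) by (simp add: subset_iff)
  moreover have "K +> a = K +> (SOME b. b \<in> C)" apply (rule a_repr_independence[OF _ a(1) sg]) using s a(2) by simp
  hence "K +> (SOME b. b \<in> C) = C" using a(2) by (metis)
  ultimately show ?thesis by (rule conjI)
qed

lemma (in cring) quot_mem_ideal:
  assumes "ideal K R" "ideal J R" "K \<subseteq> J" "a \<in> carrier R" "K +> a \<in> ((+>) K) ` J"
  shows "a \<in> J"
proof -
  obtain b where b: "b \<in> J" "K +> a = K +> b" using assms(5) by blast
  have bc: "b \<in> carrier R" using b(1) ideal.Icarr[OF assms(2)] by blast
  have "a \<ominus> b \<in> J" using quot_eq_iff[OF assms(1) assms(4) bc] b(2) assms(3) by blast
  hence "(a \<ominus> b) \<oplus> b \<in> J" using b(1) additive_subgroup.a_closed[OF ideal.axioms(1)[OF assms(2)]] by blast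
  moreover have "(a \<ominus> b) \<oplus> b = a" using assms(4) bc by algebra
  ultimately show ?thesis by simp
qed

lemma (in cring) genideal_carr: "S \<subseteq> carrier R \<Longrightarrow> genideal R S \<subseteq> carrier R"
  by (rule genideal_minimal[OF oneideal])

lemma (in cring) quot_genideal:
  assumes "ideal K R" "S \<subseteq> carrier R"
  shows "((+>) K) ` genideal R S = genideal (R Quot K) (((+>) K) ` S)"
proof
  interpret Q: cring "R Quot K" using quot_cring[OF assms(1)] .
  have id1: "ideal (((+>) K) ` genideal R S) (R Quot K)"
    using ring_ideal_imp_quot_ideal[OF assms(1) genideal_ideal[OF assms(2)]] .
  have "((+>) K) ` S \<subseteq> ((+>) K) ` genideal R S" using genideal_self[OF assms(2)] by blast
  thus "genideal (R Quot K) (((+>) K) ` S) \<subseteq> ((+>) K) ` genideal R S"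
    using Q.genideal_minimal[OF id1] by blast
  have gQ: "ideal (genideal (R Quot K) (((+>) K) ` S)) (R Quot K)"
    apply (rule Q.genideal_ideal) using quot_in[OF assms(1)] assms(2) by blast
  have id2: "ideal {r \<in> carrier R. K +> r \<in> genideal (R Quot K) (((+>) K) ` S)} R"
    using ring_hom_ring.ideal_vimage[OF ideal.rcos_ring_hom_ring[OF assms(1)] gQ] .
  have "S \<subseteq> {r \<in> carrier R. K +> r \<in> genideal (R Quot K) (((+>) K) ` S)}"
    using assms(2) Q.genideal_self[of "((+>) K) ` S"] quot_in[OF assms(1)] by blast
  hence "genideal R S \<subseteq> {r \<in> carrier R. K +> r \<in> genideal (R Quot K) (((+>) K) ` S)}"
    using genideal_minimal[OF id2] by blast
  thus "((+>) K) ` genideal R S \<subseteq> genideal (R Quot K) (((+>) K) ` S)" by blast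
qed

lemma (in cring) quot_local:
  assumes "local_ring R" "ideal K R" "K \<subseteq> locmax R"
  shows "local_ring (R Quot K) \<and> locmax (R Quot K) = ((+>) K) ` locmax R"
proof -
  interpret Q: cring "R Quot K" by (rule quot_cring[OF assms(2)])
  have im: "ideal (((+>) K) ` locmax R) (R Quot K)"
    by (rule ring_ideal_imp_quot_ideal[OF assms(2) local_ideal[OF assms(1)]])
  show ?thesis
  proof (rule Q.local_ringI[OF im])
    show "\<one>\<^bsub>R Quot K\<^esub> \<notin> ((+>) K) ` locmax R"
    proof
      assume "\<one>\<^bsub>R Quot K\<^esub> \<in> ((+>) K) ` locmax R"
      hence "K +> \<one> \<in> ((+>) K) ` locmax R" by (simp add: quot_one)
      hence "\<one> \<in> locmax R" by (rule quot_mem_ideal[OF assms(2) local_ideal[OF assms(1)] assms(3) one_closed])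
      thus False using local_one_notin[OF assms(1)] by simp
    qed
    fix C assume C: "C \<in> carrier (R Quot K)" "C \<notin> ((+>) K) ` locmax R"
    obtain b where b: "b \<in> carrier R" "C = K +> b" using quot_elem[OF assms(2) C(1)] by blast
    have "b \<notin> locmax R" using C(2) b(2) by blast
    hence bu: "b \<in> Units R" by (rule local_unit[OF assms(1) b(1)])
    hence ib: "inv b \<in> carrier R" "inv b \<otimes> b = \<one>" "b \<otimes> inv b = \<one>" by simp_all
    have 1: "(K +> inv b) \<otimes>\<^bsub>R Quot K\<^esub> C = \<one>\<^bsub>R Quot K\<^esub>"
      using quot_mult[OF assms(2) ib(1) b(1)] ib(2) b(2) by (simp add: quot_one)
    have 2: "C \<otimes>\<^bsub>R Quot K\<^esub> (K +> inv b) = \<one>\<^bsub>R Quot K\<^esub>"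
      using quot_mult[OF assms(2) b(1) ib(1)] ib(3) b(2) by (simp add: quot_one)
    have "K +> inv b \<in> carrier (R Quot K)" by (rule quot_in[OF assms(2) ib(1)])
    thus "C \<in> Units (R Quot K)" unfolding Units_def using 1 2 C(1) by blast
  qed
qed

lemma (in cring) quot_ideal_eq:
  assumes "ideal K R" "ideal J (R Quot K)"
  shows "J = ((+>) K) ` (\<Union>J)"
proof
  have Jc: "J \<subseteq> carrier (R Quot K)" by (rule additive_subgroup.a_subset[OF ideal.axioms(1)[OF assms(2)]])
  show "J \<subseteq> ((+>) K) ` (\<Union>J)"
  proof
    fix C assume C: "C \<in> J"
    hence Cc: "C \<in> carrier (R Quot K)" using Jc by blast
    have r: "(SOME a. a \<in> C) \<in> carrier R \<and> K +> (SOME a. a \<in> C) = C" by (rule quot_rep[OF assms(1) Cc])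
    obtain a where a: "a \<in> carrier R" "C = K +> a" using quot_elem[OF assms(1) Cc] by blast
    have "a \<in> \<Union>J" using canonical_proj_vimage_mem_iff[OF assms(1) Jc a(1)] C a(2) by simp
    thus "C \<in> ((+>) K) ` (\<Union>J)" using a(2) by blast
  qed
  show "((+>) K) ` (\<Union>J) \<subseteq> J"
  proof
    fix C assume "C \<in> ((+>) K) ` (\<Union>J)"
    then obtain a where a: "a \<in> \<Union>J" "C = K +> a" by blast
    have "\<Union>J \<subseteq> carrier R" by (rule canonical_proj_vimage_in_carrier[OF assms(1) Jc])
    hence ac: "a \<in> carrier R" using a(1) by blast
    show "C \<in> J" using canonical_proj_vimage_mem_iff[OF assms(1) Jc ac] a by simp
  qed
qed

lemma (in cring) quot_noetherian:
  assumes "noetherian_ring R" "ideal K R"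
  shows "noetherian_ring (R Quot K)"
proof -
  interpret Q: cring "R Quot K" by (rule quot_cring[OF assms(2)])
  show ?thesis
  proof (rule Q.noetherian_ringI)
    fix J assume J: "ideal J (R Quot K)"
    have iU: "ideal (\<Union>J) R" by (rule quot_ideal_imp_ring_ideal[OF assms(2) J])
    obtain A where A: "A \<subseteq> carrier R" "finite A" "\<Union>J = Idl A"
      using noetherian_ring.finetely_gen[OF assms(1) iU] by blast
    have "J = ((+>) K) ` (Idl A)" using quot_ideal_eq[OF assms(2) J] A(3) by simp
    also have "... = Idl\<^bsub>R Quot K\<^esub> (((+>) K) ` A)" by (rule quot_genideal[OF assms(2) A(1)])
    finally have "J = Idl\<^bsub>R Quot K\<^esub> (((+>) K) ` A)" .
    moreover have "((+>) K) ` A \<subseteq> carrier (R Quot K)" using quot_in[OF assms(2)] A(1) by blast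
    moreover have "finite (((+>) K) ` A)" using A(2) by simp
    ultimately show "\<exists>A\<subseteq>carrier (R Quot K). finite A \<and> J = Idl\<^bsub>R Quot K\<^esub> A" by blast
  qed
qed

lemma (in ring) set_add_mem_iff: "x \<in> A <+>\<^bsub>R\<^esub> B \<longleftrightarrow> (\<exists>a\<in>A. \<exists>b\<in>B. x = a \<oplus> b)"
  unfolding set_add_def' by auto

lemma (in cring) genideal_insert_mem:
  assumes "g \<in> carrier R" "S \<subseteq> carrier R" "x \<in> Idl (insert g S)"
  shows "\<exists>r\<in>carrier R. \<exists>y\<in>Idl S. x = r \<otimes> g \<oplus> y"
proof -
  have iT: "ideal (PIdl g <+>\<^bsub>R\<^esub> Idl S) R" by (rule add_ideals[OF cgenideal_ideal[OF assms(1)] genideal_ideal[OF assms(2)]])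
  have z: "\<zero> \<in> Idl S" by (rule additive_subgroup.zero_closed[OF ideal.axioms(1)[OF genideal_ideal[OF assms(2)]]])
  have "insert g S \<subseteq> PIdl g <+>\<^bsub>R\<^esub> Idl S"
  proof
    fix s assume s: "s \<in> insert g S"
    show "s \<in> PIdl g <+>\<^bsub>R\<^esub> Idl S"
    proof (cases "s = g")
      case True
      have "\<one> \<otimes> g \<in> PIdl g" unfolding cgenideal_def by blast
      moreover have "s = \<one> \<otimes> g \<oplus> \<zero>" using True assms(1) by simp
      ultimately show ?thesis using z set_add_mem_iff by blast
    next
      case False
      hence sS: "s \<in> S" using s by simp
      hence sc: "s \<in> carrier R" using assms(2) by blast
      have "\<zero> \<otimes> g \<in> PIdl g" unfolding cgenideal_def by blast
      moreover have "s = \<zero> \<otimes> g \<oplus> s" using sc assms(1) by simp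
      moreover have "s \<in> Idl S" using genideal_self[OF assms(2)] sS by blast
      ultimately show ?thesis using set_add_mem_iff by blast
    qed
  qed
  hence "Idl (insert g S) \<subseteq> PIdl g <+>\<^bsub>R\<^esub> Idl S" by (rule genideal_minimal[OF iT])
  hence "x \<in> PIdl g <+>\<^bsub>R\<^esub> Idl S" using assms(3) by blast
  then obtain i y where iy: "i \<in> PIdl g" "y \<in> Idl S" "x = i \<oplus> y" using set_add_mem_iff by blast
  then obtain r where "r \<in> carrier R" "i = r \<otimes> g" unfolding cgenideal_def by blast
  thus ?thesis using iy by blast
qed

lemma (in cring) solve_aux:
  assumes "x \<in> carrier R" "y \<in> carrier R" "c \<in> carrier R" "x = y \<oplus> c \<otimes> x"
  shows "(\<one> \<ominus> c) \<otimes> x = y"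
proof -
  have "(\<one> \<ominus> c) \<otimes> x = x \<ominus> c \<otimes> x" using assms(1-3) by algebra
  also have "... = (y \<oplus> c \<otimes> x) \<ominus> c \<otimes> x" using assms(4) by metis
  also have "... = y" using assms(1-3) by algebra
  finally show ?thesis .
qed

lemma (in cring) unit_cancel:
  assumes "u \<in> Units R" "g \<in> carrier R"
  shows "inv u \<otimes> (u \<otimes> g) = g"
proof -
  have "inv u \<otimes> (u \<otimes> g) = (inv u \<otimes> u) \<otimes> g"
    using m_assoc[OF Units_inv_closed[OF assms(1)] Units_closed[OF assms(1)] assms(2)] by (rule sym)
  thus ?thesis using assms by simp
qed

lemma (in cring) genideal_mono: "T \<subseteq> carrier R \<Longrightarrow> S \<subseteq> T \<Longrightarrow> Idl S \<subseteq> Idl T"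
  by (rule subset_Idl_subset)

lemma (in cring) nakayama_step1:
  assumes loc: "local_ring R" and g: "g \<in> carrier R" and S: "S \<subseteq> carrier R"
    and y: "y \<in> ideal_prod R (locmax R) (Idl (insert g S))"
  shows "\<exists>a\<in>locmax R. \<exists>z\<in>ideal_prod R (locmax R) (Idl S). y = a \<otimes> g \<oplus> z"
  using y
proof (induct y rule: ideal_prod.induct)
  case (prod i n)
  have ic: "i \<in> carrier R" using prod(1) local_carr[OF loc] by blast
  obtain r n' where rn: "r \<in> carrier R" "n' \<in> Idl S" "n = r \<otimes> g \<oplus> n'"
    using genideal_insert_mem[OF g S prod(2)] by blast
  have n'c: "n' \<in> carrier R" using rn(2) genideal_carr[OF S] by blast
  have "i \<otimes> n = (i \<otimes> r) \<otimes> g \<oplus> i \<otimes> n'" using ic rn n'c g by (simp add: r_distr m_assoc)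
  moreover have "i \<otimes> r \<in> locmax R" by (rule ideal.I_r_closed[OF local_ideal[OF loc] prod(1) rn(1)])
  moreover have "i \<otimes> n' \<in> ideal_prod R (locmax R) (Idl S)" by (rule ideal_prod.prod[OF prod(1) rn(2)])
  ultimately show ?case by blast
next
  case (sum s1 s2)
  obtain a1 z1 where 1: "a1 \<in> locmax R" "z1 \<in> ideal_prod R (locmax R) (Idl S)" "s1 = a1 \<otimes> g \<oplus> z1"
    using sum(2) by blast
  obtain a2 z2 where 2: "a2 \<in> locmax R" "z2 \<in> ideal_prod R (locmax R) (Idl S)" "s2 = a2 \<otimes> g \<oplus> z2"
    using sum(4) by blast
  have ip: "ideal (ideal_prod R (locmax R) (Idl S)) R"
    by (rule ideal_prod_is_ideal[OF local_ideal[OF loc] genideal_ideal[OF S]])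
  have c: "a1 \<in> carrier R" "a2 \<in> carrier R" using 1 2 local_carr[OF loc] by blast+
  have c2: "z1 \<in> carrier R" "z2 \<in> carrier R" using 1(2) 2(2) ideal.Icarr[OF ip] by blast+
  have "s1 \<oplus> s2 = (a1 \<oplus> a2) \<otimes> g \<oplus> (z1 \<oplus> z2)" using 1(3) 2(3) c c2 g by algebra
  moreover have "a1 \<oplus> a2 \<in> locmax R"
    by (rule additive_subgroup.a_closed[OF ideal.axioms(1)[OF local_ideal[OF loc]] 1(1) 2(1)])
  moreover have "z1 \<oplus> z2 \<in> ideal_prod R (locmax R) (Idl S)"
    by (rule ideal_prod.sum[OF 1(2) 2(2)])
  ultimately show ?case by blast
qed

lemma (in cring) nakayama_step2:
  assumes loc: "local_ring R" and g: "g \<in> carrier R" and J: "ideal J R"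
    and N: "ideal N R" "N \<subseteq> J <+>\<^bsub>R\<^esub> PIdl g"
    and z: "z \<in> ideal_prod R (locmax R) N"
  shows "\<exists>j\<in>J. \<exists>b\<in>locmax R. z = j \<oplus> b \<otimes> g"
  using z
proof (induct z rule: ideal_prod.induct)
  case (prod i w)
  have ic: "i \<in> carrier R" using prod(1) local_carr[OF loc] by blast
  have "w \<in> J <+>\<^bsub>R\<^esub> PIdl g" using prod(2) N(2) by blast
  then obtain j p where jp: "j \<in> J" "p \<in> PIdl g" "w = j \<oplus> p" using set_add_mem_iff by blast
  then obtain r where r: "r \<in> carrier R" "p = r \<otimes> g" unfolding cgenideal_def by blast
  have jc: "j \<in> carrier R" using jp(1) ideal.Icarr[OF J] by blast
  have "i \<otimes> w = i \<otimes> j \<oplus> (i \<otimes> r) \<otimes> g" using jp(3) r ic jc g by (simp add: r_distr m_assoc)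
  moreover have "i \<otimes> j \<in> J" by (rule ideal.I_l_closed[OF J jp(1) ic])
  moreover have "i \<otimes> r \<in> locmax R" by (rule ideal.I_r_closed[OF local_ideal[OF loc] prod(1) r(1)])
  ultimately show ?case by blast
next
  case (sum s1 s2)
  obtain j1 b1 where 1: "j1 \<in> J" "b1 \<in> locmax R" "s1 = j1 \<oplus> b1 \<otimes> g" using sum(2) by blast
  obtain j2 b2 where 2: "j2 \<in> J" "b2 \<in> locmax R" "s2 = j2 \<oplus> b2 \<otimes> g" using sum(4) by blast
  have c: "b1 \<in> carrier R" "b2 \<in> carrier R" using 1 2 local_carr[OF loc] by blast+
  have c2: "j1 \<in> carrier R" "j2 \<in> carrier R" using 1(1) 2(1) ideal.Icarr[OF J] by blast+
  have "s1 \<oplus> s2 = (j1 \<oplus> j2) \<oplus> (b1 \<oplus> b2) \<otimes> g" using 1(3) 2(3) c c2 g by algebra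
  moreover have "b1 \<oplus> b2 \<in> locmax R"
    by (rule additive_subgroup.a_closed[OF ideal.axioms(1)[OF local_ideal[OF loc]] 1(2) 2(2)])
  moreover have "j1 \<oplus> j2 \<in> J"
    by (rule additive_subgroup.a_closed[OF ideal.axioms(1)[OF J] 1(1) 2(1)])
  ultimately show ?case by blast
qed

lemma (in cring) nakayama:
  assumes loc: "local_ring R" and fin: "finite S" and S: "S \<subseteq> carrier R"
  shows "ideal J R \<Longrightarrow> (\<forall>x\<in>Idl S. \<exists>j\<in>J. \<exists>y\<in>ideal_prod R (locmax R) (Idl S). x = j \<oplus> y)
     \<Longrightarrow> Idl S \<subseteq> J"
  using fin S
proof (induction S arbitrary: J rule: finite_induct)
  case empty
  have "Idl {} \<subseteq> {\<zero>}" by (rule genideal_minimal[OF zeroideal]) simp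
  moreover have "\<zero> \<in> J" by (rule additive_subgroup.zero_closed[OF ideal.axioms(1)[OF empty(1)]])
  ultimately show ?case by blast
next
  case (insert g S)
  note J = insert.prems(1)
  have g: "g \<in> carrier R" using insert.prems(3) by simp
  have S: "S \<subseteq> carrier R" using insert.prems(3) by simp
  have iS: "insert g S \<subseteq> carrier R" using insert.prems(3) by simp
  have iP: "ideal (PIdl g) R" by (rule cgenideal_ideal[OF g])
  define J' where "J' = J <+>\<^bsub>R\<^esub> PIdl g"
  have iJ': "ideal J' R" unfolding J'_def by (rule add_ideals[OF J iP])
  have NN: "Idl S \<subseteq> Idl (insert g S)" by (rule genideal_mono[OF iS]) blast
  have "\<forall>x\<in>Idl S. \<exists>j\<in>J'. \<exists>y\<in>ideal_prod R (locmax R) (Idl S). x = j \<oplus> y"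
  proof
    fix x assume "x \<in> Idl S"
    hence "x \<in> Idl (insert g S)" using NN by blast
    then obtain j y where jy: "j \<in> J" "y \<in> ideal_prod R (locmax R) (Idl (insert g S))" "x = j \<oplus> y"
      using insert.prems(2) by blast
    obtain a z where az: "a \<in> locmax R" "z \<in> ideal_prod R (locmax R) (Idl S)" "y = a \<otimes> g \<oplus> z"
      using nakayama_step1[OF loc g S jy(2)] by blast
    have ac: "a \<in> carrier R" using az(1) local_carr[OF loc] by blast
    have jc: "j \<in> carrier R" using jy(1) ideal.Icarr[OF J] by blast
    have ip: "ideal (ideal_prod R (locmax R) (Idl S)) R"
      by (rule ideal_prod_is_ideal[OF local_ideal[OF loc] genideal_ideal[OF S]])
    have zc: "z \<in> carrier R" using az(2) ideal.Icarr[OF ip] by blast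
    have "x = (j \<oplus> a \<otimes> g) \<oplus> z" using jy(3) az(3) ac jc zc g by algebra
    moreover have "a \<otimes> g \<in> PIdl g" unfolding cgenideal_def using ac by blast
    hence "j \<oplus> a \<otimes> g \<in> J'" unfolding J'_def using jy(1) set_add_mem_iff by blast
    ultimately show "\<exists>j\<in>J'. \<exists>y\<in>ideal_prod R (locmax R) (Idl S). x = j \<oplus> y" using az(2) by blast
  qed
  hence SJ': "Idl S \<subseteq> J'" using insert.IH[OF iJ' _ S] by blast
  have gN: "g \<in> Idl (insert g S)" using genideal_self[OF iS] by blast
  then obtain j y where jy: "j \<in> J" "y \<in> ideal_prod R (locmax R) (Idl (insert g S))" "g = j \<oplus> y"
    using insert.prems(2) by blast
  obtain a z where az: "a \<in> locmax R" "z \<in> ideal_prod R (locmax R) (Idl S)" "y = a \<otimes> g \<oplus> z"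
    using nakayama_step1[OF loc g S jy(2)] by blast
  obtain j2 b where jb: "j2 \<in> J" "b \<in> locmax R" "z = j2 \<oplus> b \<otimes> g"
    using nakayama_step2[OF loc g J genideal_ideal[OF S] SJ'[unfolded J'_def] az(2)] by blast
  have c: "a \<in> carrier R" "b \<in> carrier R" using az(1) jb(2) local_carr[OF loc] by blast+
  have c2: "j \<in> carrier R" "j2 \<in> carrier R" using jy(1) jb(1) ideal.Icarr[OF J] by blast+
  have cm: "a \<oplus> b \<in> locmax R"
    by (rule additive_subgroup.a_closed[OF ideal.axioms(1)[OF local_ideal[OF loc]] az(1) jb(2)])
  have u: "\<one> \<ominus> (a \<oplus> b) \<in> Units R" by (rule local_one_minus_unit[OF loc cm])
  have "g = (j \<oplus> j2) \<oplus> (a \<oplus> b) \<otimes> g" using jy(3) az(3) jb(3) c c2 g by algebra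
  hence e: "(\<one> \<ominus> (a \<oplus> b)) \<otimes> g = j \<oplus> j2" by (intro solve_aux) (use c c2 g in simp_all)
  have "j \<oplus> j2 \<in> J" by (rule additive_subgroup.a_closed[OF ideal.axioms(1)[OF J] jy(1) jb(1)])
  hence "inv (\<one> \<ominus> (a \<oplus> b)) \<otimes> ((\<one> \<ominus> (a \<oplus> b)) \<otimes> g) \<in> J"
    using e ideal.I_l_closed[OF J] u by simp
  moreover have "inv (\<one> \<ominus> (a \<oplus> b)) \<otimes> ((\<one> \<ominus> (a \<oplus> b)) \<otimes> g) = g"
    by (rule unit_cancel[OF u g])
  ultimately have gJ: "g \<in> J" by simp
  have PJ: "PIdl g \<subseteq> J" by (rule cgenideal_minimal[OF J gJ])
  have "J' \<subseteq> J"
  proof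
    fix x assume "x \<in> J'"
    then obtain j p where "j \<in> J" "p \<in> PIdl g" "x = j \<oplus> p" unfolding J'_def using set_add_mem_iff by blast
    thus "x \<in> J" using PJ additive_subgroup.a_closed[OF ideal.axioms(1)[OF J]] by blast
  qed
  hence "insert g S \<subseteq> J" using gJ SJ' genideal_self[OF S] by blast
  thus ?case by (rule genideal_minimal[OF J])
qed

lemma (in cring) nakayama_max:
  assumes noe: "noetherian_ring R" and loc: "local_ring R" and J: "ideal J R"
    and h: "\<forall>x\<in>locmax R. \<exists>j\<in>J. \<exists>y\<in>ideal_prod R (locmax R) (locmax R). x = j \<oplus> y"
  shows "locmax R \<subseteq> J"
proof -
  obtain A where A: "A \<subseteq> carrier R" "finite A" "locmax R = Idl A"
    using noetherian_ring.finetely_gen[OF noe local_ideal[OF loc]] by blast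
  show ?thesis using nakayama[OF loc A(2) A(1) J] h A(3) by simp
qed

lemma (in cring) prod_sub_max:
  assumes "local_ring R" shows "ideal_prod R (locmax R) (locmax R) \<subseteq> locmax R"
  using ideal_prod_inter[OF local_ideal[OF assms] local_ideal[OF assms]] by blast

lemma (in cring) gen_transfer:
  assumes noe: "noetherian_ring R" and loc: "local_ring R" and K: "ideal K R"
    and Km: "K \<subseteq> ideal_prod R (locmax R) (locmax R)" and S: "S \<subseteq> carrier R"
  shows "genideal (R Quot K) (((+>) K) ` S) = ((+>) K) ` locmax R \<longleftrightarrow> genideal R S = locmax R"
proof
  assume "genideal R S = locmax R"
  thus "genideal (R Quot K) (((+>) K) ` S) = ((+>) K) ` locmax R" using quot_genideal[OF K S] by simp
next
  assume h: "genideal (R Quot K) (((+>) K) ` S) = ((+>) K) ` locmax R"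
  have H: "((+>) K) ` genideal R S = ((+>) K) ` locmax R" using quot_genideal[OF K S] h by simp
  have Km': "K \<subseteq> locmax R" using Km prod_sub_max[OF loc] by blast
  have iS: "ideal (genideal R S) R" by (rule genideal_ideal[OF S])
  have "S \<subseteq> locmax R"
  proof
    fix s assume s: "s \<in> S"
    hence "K +> s \<in> ((+>) K) ` locmax R" using H genideal_self[OF S] by blast
    thus "s \<in> locmax R" using quot_mem_ideal[OF K local_ideal[OF loc] Km'] s S by blast
  qed
  hence sub: "genideal R S \<subseteq> locmax R" by (rule genideal_minimal[OF local_ideal[OF loc]])
  have "\<forall>x\<in>locmax R. \<exists>j\<in>genideal R S. \<exists>y\<in>ideal_prod R (locmax R) (locmax R). x = j \<oplus> y"
  proof
    fix x assume x: "x \<in> locmax R"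
    hence xc: "x \<in> carrier R" using local_carr[OF loc] by blast
    have "K +> x \<in> ((+>) K) ` genideal R S" using H x by blast
    then obtain g where g: "g \<in> genideal R S" "K +> x = K +> g" by blast
    have gc: "g \<in> carrier R" using g(1) genideal_carr[OF S] by blast
    have "x \<ominus> g \<in> K" using quot_eq_iff[OF K xc gc] g(2) by simp
    hence "x \<ominus> g \<in> ideal_prod R (locmax R) (locmax R)" using Km by blast
    moreover have "x = g \<oplus> (x \<ominus> g)" using xc gc by algebra
    ultimately show "\<exists>j\<in>genideal R S. \<exists>y\<in>ideal_prod R (locmax R) (locmax R). x = j \<oplus> y"
      using g(1) by blast
  qed
  hence "locmax R \<subseteq> genideal R S" by (rule nakayama_max[OF noe loc iS])
  thus "genideal R S = locmax R" using sub by blast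
qed

lemma set_take_drop_map:
  "set (take i (map f xs) @ drop (Suc i) (map f xs)) = f ` set (take i xs @ drop (Suc i) xs)"
  by (simp add: take_map drop_map image_Un)

lemma (in cring) mb_transfer:
  assumes noe: "noetherian_ring R" and loc: "local_ring R" and K: "ideal K R"
    and Km: "K \<subseteq> ideal_prod R (locmax R) (locmax R)" and xs: "set xs \<subseteq> carrier R"
  shows "minimal_basis R (locmax R) xs \<longleftrightarrow>
         minimal_basis (R Quot K) (((+>) K) ` locmax R) (map ((+>) K) xs)"
proof -
  have c1: "set (map ((+>) K) xs) \<subseteq> carrier (R Quot K)" using xs quot_in[OF K] by auto
  have sub: "set (take i xs @ drop (Suc i) xs) \<subseteq> carrier R" for i
    using xs set_take_subset set_drop_subset by fastforce
  have eq: "genideal (R Quot K) (set (take i (map ((+>) K) xs) @ drop (Suc i) (map ((+>) K) xs))) =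
         ((+>) K) ` locmax R \<longleftrightarrow> genideal R (set (take i xs @ drop (Suc i) xs)) = locmax R" for i
    unfolding set_take_drop_map by (rule gen_transfer[OF noe loc K Km sub])
  have eq0: "genideal (R Quot K) (set (map ((+>) K) xs)) = ((+>) K) ` locmax R \<longleftrightarrow>
         genideal R (set xs) = locmax R"
    unfolding set_map by (rule gen_transfer[OF noe loc K Km xs])
  show ?thesis unfolding minimal_basis_def using c1 xs eq eq0 by simp
qed

lemma (in cring) prime_is_max:
  assumes loc: "local_ring R" and sq: "\<forall>z\<in>locmax R. z \<otimes> z = \<zero>" and P: "primeideal P R"
  shows "P = locmax R"
proof
  have iP: "ideal P R" using P primeideal.axioms(1) by blast
  have "\<one> \<notin> P"
  proof
    assume "\<one> \<in> P"
    hence "P = carrier R" by (rule ideal.one_imp_carrier[OF iP])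
    thus False using primeideal.I_notcarr[OF P] by simp
  qed
  thus "P \<subseteq> locmax R" by (rule local_proper_sub[OF loc iP])
  show "locmax R \<subseteq> P"
  proof
    fix z assume z: "z \<in> locmax R"
    hence zc: "z \<in> carrier R" using local_carr[OF loc] by blast
    have "z \<otimes> z \<in> P" using sq z additive_subgroup.zero_closed[OF ideal.axioms(1)[OF iP]] by simp
    thus "z \<in> P" using primeideal.I_prime[OF P zc zc] by blast
  qed
qed

lemma (in cring) not_regular_aux:
  assumes loc: "local_ring R" and sq: "\<forall>z\<in>locmax R. z \<otimes> z = \<zero>" and nz: "locmax R \<noteq> {\<zero>}"
  shows "\<not> regular_local_ring R"
proof
  assume "regular_local_ring R"
  then obtain xs where xs: "minimal_basis R (locmax R) xs" "krull_dim R = enat (length xs)"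
    unfolding regular_local_ring_def by blast
  have "krull_dim R \<le> 0"
    unfolding krull_dim_def
  proof (rule Sup_least)
    fix e assume "e \<in> {enat n | n. \<exists>P :: nat \<Rightarrow> 'a set.
      (\<forall>i \<le> n. primeideal (P i) R) \<and> (\<forall>i < n. P i \<subset> P (Suc i))}"
    then obtain n P where e: "e = enat n" "\<forall>i \<le> n. primeideal (P i) R" "\<forall>i < n. P i \<subset> P (Suc i)"
      by blast
    have "n = 0"
    proof (rule ccontr)
      assume "n \<noteq> 0"
      hence "P 0 \<subset> P 1" "primeideal (P 0) R" "primeideal (P 1) R" using e by auto
      moreover have "P 0 = locmax R" using prime_is_max[OF loc sq] \<open>primeideal (P 0) R\<close> by simp
      moreover have "P 1 = locmax R" using prime_is_max[OF loc sq] \<open>primeideal (P 1) R\<close> by simp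
      ultimately show False by simp
    qed
    thus "e \<le> 0" using e(1) by (simp add: zero_enat_def)
  qed
  hence "length xs = 0" using xs(2) by (simp add: zero_enat_def)
  hence "xs = []" by simp
  hence "genideal R {} = locmax R" using xs(1) unfolding minimal_basis_def by simp
  moreover have "genideal R {} \<subseteq> {\<zero>}" by (rule genideal_minimal[OF zeroideal]) simp
  moreover have "\<zero> \<in> locmax R" by (rule additive_subgroup.zero_closed[OF ideal.axioms(1)[OF local_ideal[OF loc]]])
  ultimately show False using nz by blast
qed

lemma (in cring) fibre_not_regular:
  assumes noe: "noetherian_ring R" and loc: "local_ring R" and M: "M \<subseteq> locmax R"
    and ne: "genideal R M \<noteq> locmax R"
  shows "\<not> regular_local_ring ((R Quot (ideal_prod R (locmax R) (locmax R))) Quot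
            genideal (R Quot (ideal_prod R (locmax R) (locmax R)))
              (((+>) (ideal_prod R (locmax R) (locmax R))) ` M))"
proof -
  define n2 where "n2 = ideal_prod R (locmax R) (locmax R)"
  define Bq where "Bq = R Quot n2"
  have Mc: "M \<subseteq> carrier R" using M local_carr[OF loc] by blast
  have in2: "ideal n2 R" unfolding n2_def by (rule ideal_prod_is_ideal[OF local_ideal[OF loc] local_ideal[OF loc]])
  have n2m: "n2 \<subseteq> locmax R" unfolding n2_def by (rule prod_sub_max[OF loc])
  interpret Q: cring Bq unfolding Bq_def by (rule quot_cring[OF in2])
  have qloc: "local_ring Bq" "locmax Bq = ((+>) n2) ` locmax R"
    using quot_local[OF loc in2 n2m] unfolding Bq_def by simp_all
  define G where "G = genideal Bq (((+>) n2) ` M)"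
  have G: "G = ((+>) n2) ` genideal R M" unfolding G_def Bq_def using quot_genideal[OF in2 Mc] by simp
  have iGR: "ideal (genideal R M) R" by (rule genideal_ideal[OF Mc])
  have GM: "genideal R M \<subseteq> locmax R" by (rule genideal_minimal[OF local_ideal[OF loc] M])
  have iG: "ideal G Bq" unfolding G Bq_def by (rule ring_ideal_imp_quot_ideal[OF in2 iGR])
  have Gm: "G \<subseteq> locmax Bq" unfolding G qloc(2) using GM by blast
  have floc: "local_ring (Bq Quot G)" "locmax (Bq Quot G) = (a_r_coset Bq G) ` locmax Bq"
    using Q.quot_local[OF qloc(1) iG Gm] by simp_all
  interpret F: cring "Bq Quot G" by (rule Q.quot_cring[OF iG])
  have pc: "n2 +> x \<in> carrier Bq" if "x \<in> carrier R" for x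
    unfolding Bq_def by (rule quot_in[OF in2 that])
  have "locmax (Bq Quot G) \<noteq> {\<zero>\<^bsub>Bq Quot G\<^esub>}"
  proof
    assume eq: "locmax (Bq Quot G) = {\<zero>\<^bsub>Bq Quot G\<^esub>}"
    have "\<forall>x\<in>locmax R. \<exists>j\<in>genideal R M. \<exists>y\<in>ideal_prod R (locmax R) (locmax R). x = j \<oplus> y"
    proof
      fix x assume x: "x \<in> locmax R"
      hence xc: "x \<in> carrier R" using local_carr[OF loc] by blast
      have "G +>\<^bsub>Bq\<^esub> (n2 +> x) \<in> locmax (Bq Quot G)" unfolding floc(2) qloc(2) using x by blast
      hence "G +>\<^bsub>Bq\<^esub> (n2 +> x) = G" using eq Q.quot_zero by simp
      hence "n2 +> x \<in> G" using Q.quot_eq_zero_iff[OF iG pc[OF xc]] by simp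
      then obtain g where g: "g \<in> genideal R M" "n2 +> x = n2 +> g" unfolding G by blast
      have gc: "g \<in> carrier R" using g(1) genideal_carr[OF Mc] by blast
      have "x \<ominus> g \<in> n2" using quot_eq_iff[OF in2 xc gc] g(2) by simp
      moreover have "x = g \<oplus> (x \<ominus> g)" using xc gc by algebra
      ultimately show "\<exists>j\<in>genideal R M. \<exists>y\<in>ideal_prod R (locmax R) (locmax R). x = j \<oplus> y"
        using g(1) unfolding n2_def by blast
    qed
    hence "locmax R \<subseteq> genideal R M" by (rule nakayama_max[OF noe loc iGR])
    thus False using GM ne by blast
  qed
  moreover have "\<forall>z\<in>locmax (Bq Quot G). z \<otimes>\<^bsub>Bq Quot G\<^esub> z = \<zero>\<^bsub>Bq Quot G\<^esub>"
  proof
    fix z assume "z \<in> locmax (Bq Quot G)"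
    then obtain x where x: "x \<in> locmax R" "z = G +>\<^bsub>Bq\<^esub> (n2 +> x)" unfolding floc(2) qloc(2) by blast
    have xc: "x \<in> carrier R" using x(1) local_carr[OF loc] by blast
    have xx: "x \<otimes> x \<in> n2" unfolding n2_def by (rule ideal_prod.prod[OF x(1) x(1)])
    have "z \<otimes>\<^bsub>Bq Quot G\<^esub> z = G +>\<^bsub>Bq\<^esub> ((n2 +> x) \<otimes>\<^bsub>Bq\<^esub> (n2 +> x))"
      unfolding x(2) by (rule Q.quot_mult[OF iG pc[OF xc] pc[OF xc]])
    also have "(n2 +> x) \<otimes>\<^bsub>Bq\<^esub> (n2 +> x) = n2 +> (x \<otimes> x)"
      unfolding Bq_def by (rule quot_mult[OF in2 xc xc])
    also have "n2 +> (x \<otimes> x) = n2" using quot_eq_zero_iff[OF in2] xc xx by simp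
    also have "n2 = \<zero>\<^bsub>Bq\<^esub>" unfolding Bq_def by (simp add: quot_zero)
    also have "G +>\<^bsub>Bq\<^esub> \<zero>\<^bsub>Bq\<^esub> = G"
      using Q.quot_eq_zero_iff[OF iG] additive_subgroup.zero_closed[OF ideal.axioms(1)[OF iG]] by simp
    finally show "z \<otimes>\<^bsub>Bq Quot G\<^esub> z = \<zero>\<^bsub>Bq Quot G\<^esub>" by (simp add: Q.quot_zero)
  qed
  ultimately have "\<not> regular_local_ring (Bq Quot G)" using F.not_regular_aux[OF floc(1)] by blast
  thus ?thesis unfolding Bq_def G_def n2_def .
qed

lemma desc_le: "(\<forall>k. I (Suc k) \<subseteq> I k) \<Longrightarrow> j \<le> k \<Longrightarrow> I k \<subseteq> I j"
  by (rule lift_Suc_antimono_le[of I]) auto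

lemma (in cring) solve_aux2:
  assumes "a \<in> carrier R" "g \<in> carrier R" "b \<in> carrier R" "a = g \<oplus> b"
  shows "g = a \<oplus> \<ominus> b"
proof -
  have "g = (g \<oplus> b) \<oplus> \<ominus> b" using assms(1-3) by algebra
  thus ?thesis using assms(4) by metis
qed

lemma (in cring) art_gen:
  assumes loc: "local_ring R" and sq: "\<forall>a\<in>locmax R. \<forall>b\<in>locmax R. a \<otimes> b = \<zero>"
    and fin: "finite S"
  shows "S \<subseteq> locmax R \<Longrightarrow> \<forall>I. (\<forall>k. ideal (I k) R) \<and> (\<forall>k. I (Suc k) \<subseteq> I k) \<and> (\<forall>k. I k \<subseteq> Idl S)
           \<longrightarrow> (\<exists>N. \<forall>k\<ge>N. I k = I N)"
  using fin
proof (induction S rule: finite_induct)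
  case empty
  show ?case
  proof (intro allI impI)
    fix I :: "nat \<Rightarrow> 'a set" assume h: "(\<forall>k. ideal (I k) R) \<and> (\<forall>k. I (Suc k) \<subseteq> I k) \<and> (\<forall>k. I k \<subseteq> Idl {})"
    have "Idl {} \<subseteq> {\<zero>}" by (rule genideal_minimal[OF zeroideal]) simp
    have "I k = {\<zero>}" for k
    proof -
      have "\<zero> \<in> I k" using additive_subgroup.zero_closed[OF ideal.axioms(1)] h by blast
      thus ?thesis using h \<open>Idl {} \<subseteq> {\<zero>}\<close> by blast
    qed
    thus "\<exists>N. \<forall>k\<ge>N. I k = I N" by simp
  qed
next
  case (insert g S)
  have gm: "g \<in> locmax R" using insert.prems by simp
  have Sm: "S \<subseteq> locmax R" using insert.prems by simp
  have g: "g \<in> carrier R" using gm local_carr[OF loc] by blast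
  have S: "S \<subseteq> carrier R" using Sm local_carr[OF loc] by blast
  have iS: "insert g S \<subseteq> carrier R" using g S by simp
  have IH: "\<And>I. (\<forall>k. ideal (I k) R) \<Longrightarrow> (\<forall>k. I (Suc k) \<subseteq> I k) \<Longrightarrow> (\<forall>k. I k \<subseteq> Idl S) \<Longrightarrow>
     (\<exists>N. \<forall>k\<ge>N. I k = I N)" using insert.IH[OF Sm] by blast
  have iM': "ideal (Idl S) R" by (rule genideal_ideal[OF S])
  show ?case
  proof (intro allI impI)
    fix I :: "nat \<Rightarrow> 'a set"
    assume h: "(\<forall>k. ideal (I k) R) \<and> (\<forall>k. I (Suc k) \<subseteq> I k) \<and> (\<forall>k. I k \<subseteq> Idl (insert g S))"
    have iI: "\<And>k. ideal (I k) R" using h by blast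
    have dI: "\<forall>k. I (Suc k) \<subseteq> I k" using h by blast
    have sI: "\<And>k. I k \<subseteq> Idl (insert g S)" using h by blast
    show "\<exists>N. \<forall>k\<ge>N. I k = I N"
    proof (cases "\<forall>k. \<exists>y\<in>I k. \<exists>m'\<in>Idl S. g = y \<oplus> m'")
      case True
      have "\<exists>N. \<forall>k\<ge>N. I k \<inter> Idl S = I N \<inter> Idl S"
      proof (rule IH)
        show "\<forall>k. ideal (I k \<inter> Idl S) R" using i_intersect[OF iI iM'] by blast
        show "\<forall>k. I (Suc k) \<inter> Idl S \<subseteq> I k \<inter> Idl S" using dI by blast
        show "\<forall>k. I k \<inter> Idl S \<subseteq> Idl S" by blast
      qed
      then obtain N1 where N1: "\<And>k. k \<ge> N1 \<Longrightarrow> I k \<inter> Idl S = I N1 \<inter> Idl S" by blast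
      have "I k = I N1" if k: "k \<ge> N1" for k
      proof
        show "I k \<subseteq> I N1" by (rule desc_le[OF dI k])
        show "I N1 \<subseteq> I k"
        proof
          fix x assume x: "x \<in> I N1"
          hence xc: "x \<in> carrier R" using ideal.Icarr[OF iI] by blast
          have "x \<in> Idl (insert g S)" using x sI by blast
          then obtain r m'' where rm: "r \<in> carrier R" "m'' \<in> Idl S" "x = r \<otimes> g \<oplus> m''"
            using genideal_insert_mem[OF g S] by blast
          obtain y m0 where ym: "y \<in> I k" "m0 \<in> Idl S" "g = y \<oplus> m0" using True by blast
          have yc: "y \<in> carrier R" using ym(1) ideal.Icarr[OF iI] by blast
          have c: "m'' \<in> carrier R" "m0 \<in> carrier R" using rm(2) ym(2) genideal_carr[OF S] by blast+
          define w where "w = r \<otimes> m0 \<oplus> m''"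
          have wM: "w \<in> Idl S" unfolding w_def
            using ideal.I_l_closed[OF iM' ym(2) rm(1)] rm(2) additive_subgroup.a_closed[OF ideal.axioms(1)[OF iM']]
            by blast
          have xe: "x = r \<otimes> y \<oplus> w" unfolding w_def using rm(3) ym(3) rm(1) yc c g by algebra
          have ry: "r \<otimes> y \<in> I k" by (rule ideal.I_l_closed[OF iI ym(1) rm(1)])
          hence ry1: "r \<otimes> y \<in> I N1" using desc_le[OF dI k] by blast
          have "w = x \<oplus> \<ominus> (r \<otimes> y)" unfolding w_def using rm(3) ym(3) rm(1) yc c g by algebra
          moreover have "\<ominus> (r \<otimes> y) \<in> I N1" by (rule additive_subgroup.a_inv_closed[OF ideal.axioms(1)[OF iI] ry1])
          ultimately have "w \<in> I N1" using x additive_subgroup.a_closed[OF ideal.axioms(1)[OF iI]] by simp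
          hence "w \<in> I k \<inter> Idl S" using N1[OF k] wM by blast
          thus "x \<in> I k" using xe ry additive_subgroup.a_closed[OF ideal.axioms(1)[OF iI]] by simp
        qed
      qed
      thus ?thesis by blast
    next
      case False
      then obtain k0 where k0: "\<not> (\<exists>y\<in>I k0. \<exists>m'\<in>Idl S. g = y \<oplus> m')" by blast
      have sub: "I k \<subseteq> Idl S" if k: "k \<ge> k0" for k
      proof
        fix x assume x: "x \<in> I k"
        hence xc: "x \<in> carrier R" using ideal.Icarr[OF iI] by blast
        have "x \<in> Idl (insert g S)" using x sI by blast
        then obtain r m'' where rm: "r \<in> carrier R" "m'' \<in> Idl S" "x = r \<otimes> g \<oplus> m''"
          using genideal_insert_mem[OF g S] by blast
        have mc: "m'' \<in> carrier R" using rm(2) genideal_carr[OF S] by blast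
        show "x \<in> Idl S"
        proof (cases "r \<in> locmax R")
          case True
          hence "r \<otimes> g = \<zero>" using sq gm by blast
          thus ?thesis using rm mc by simp
        next
          case False
          hence ru: "r \<in> Units R" by (rule local_unit[OF loc rm(1)])
          have ic: "inv r \<in> carrier R" using ru by simp
          have "inv r \<otimes> x = inv r \<otimes> (r \<otimes> g) \<oplus> inv r \<otimes> m''" using rm(3) ic rm(1) g mc by (simp add: r_distr)
          also have "inv r \<otimes> (r \<otimes> g) = g" by (rule unit_cancel[OF ru g])
          finally have e: "inv r \<otimes> x = g \<oplus> inv r \<otimes> m''" .
          have ge: "g = inv r \<otimes> x \<oplus> \<ominus> (inv r \<otimes> m'')"
            by (rule solve_aux2[OF _ g _ e]) (use ic xc mc in simp_all)
          have "inv r \<otimes> x \<in> I k" by (rule ideal.I_l_closed[OF iI x ic])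
          hence "inv r \<otimes> x \<in> I k0" using desc_le[OF dI k] by blast
          moreover have "\<ominus> (inv r \<otimes> m'') \<in> Idl S"
            using ideal.I_l_closed[OF iM' rm(2) ic] additive_subgroup.a_inv_closed[OF ideal.axioms(1)[OF iM']] by blast
          ultimately show ?thesis using k0 ge by blast
        qed
      qed
      have "\<exists>N. \<forall>k\<ge>N. I (k0 + k) = I (k0 + N)"
      proof (rule IH)
        show "\<forall>k. ideal (I (k0 + k)) R" using iI by blast
        show "\<forall>k. I (k0 + Suc k) \<subseteq> I (k0 + k)" using dI by (metis add_Suc_right)
        show "\<forall>k. I (k0 + k) \<subseteq> Idl S" using sub by simp
      qed
      then obtain N where N: "\<And>k. k \<ge> N \<Longrightarrow> I (k0 + k) = I (k0 + N)" by blast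
      have "I k = I (k0 + N)" if "k \<ge> k0 + N" for k
        using N[of "k - k0"] that by simp
      thus ?thesis by blast
    qed
  qed
qed

lemma (in cring) artinian_of_sq:
  assumes noe: "noetherian_ring R" and loc: "local_ring R"
    and sq: "\<forall>a\<in>locmax R. \<forall>b\<in>locmax R. a \<otimes> b = \<zero>"
  shows "artinian R"
  unfolding artinian_def
proof (intro conjI allI impI)
  show "ring R" by (rule ring_axioms)
  fix I :: "nat \<Rightarrow> 'a set" assume h: "(\<forall>k. ideal (I k) R) \<and> (\<forall>k. I (Suc k) \<subseteq> I k)"
  have iI: "\<And>k. ideal (I k) R" using h by blast
  have dI: "\<forall>k. I (Suc k) \<subseteq> I k" using h by blast
  obtain S where S: "S \<subseteq> carrier R" "finite S" "locmax R = Idl S"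
    using noetherian_ring.finetely_gen[OF noe local_ideal[OF loc]] by blast
  have Sm: "S \<subseteq> locmax R" using S genideal_self[OF S(1)] by simp
  show "\<exists>N. \<forall>k\<ge>N. I k = I N"
  proof (cases "\<forall>k. \<one> \<in> I k")
    case True
    hence "I k = carrier R" for k using ideal.one_imp_carrier[OF iI] by blast
    thus ?thesis by simp
  next
    case False
    then obtain k0 where k0: "\<one> \<notin> I k0" by blast
    have "I k0 \<subseteq> locmax R" by (rule local_proper_sub[OF loc iI k0])
    hence sub: "I (k0 + k) \<subseteq> Idl S" for k using desc_le[OF dI, of k0 "k0 + k"] S(3) by auto
    have "\<exists>N. \<forall>k\<ge>N. I (k0 + k) = I (k0 + N)"
      using art_gen[OF loc sq S(2) Sm, rule_format, of "\<lambda>k. I (k0 + k)"] iI dI sub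
      by (metis add_Suc_right)
    then obtain N where N: "\<And>k. k \<ge> N \<Longrightarrow> I (k0 + k) = I (k0 + N)" by blast
    have "I k = I (k0 + N)" if "k \<ge> k0 + N" for k
      using N[of "k - k0"] that by simp
    thus ?thesis by blast
  qed
qed

lemma (in ring) finsum_in_ideal:
  assumes I: "ideal I R" and fin: "finite F"
  shows "(\<forall>j\<in>F. g j \<in> I) \<Longrightarrow> finsum R g F \<in> I"
  using fin
proof (induction F rule: finite_induct)
  case empty
  thus ?case using additive_subgroup.zero_closed[OF ideal.axioms(1)[OF I]] by simp
next
  case (insert a F)
  have gc: "g \<in> F \<rightarrow> carrier R" "g a \<in> carrier R" using insert.prems ideal.Icarr[OF I] by auto
  have "finsum R g (insert a F) = g a \<oplus> finsum R g F" by (rule finsum_insert[OF insert.hyps gc])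
  moreover have "finsum R g F \<in> I" using insert.IH insert.prems by blast
  ultimately show ?case using insert.prems additive_subgroup.a_closed[OF ideal.axioms(1)[OF I]] by simp
qed

lemma (in ring) finsum_one_elem:
  assumes "g 0 \<in> carrier R"
  shows "finsum R g {..<1::nat} = g 0"
proof -
  have "{..<1::nat} = insert 0 {}" by auto
  thus ?thesis using assms by (simp add: finsum_insert)
qed

lemma br_unfold:
  assumes "basically_regular A B \<phi>"
  shows "noetherian_ring A" "local_ring A" "noetherian_ring B" "local_ring B"
    "\<phi> \<in> ring_hom A B" "\<phi> ` locmax A \<subseteq> locmax B"
    "\<And>xs. minimal_basis A (locmax A) xs \<Longrightarrow> \<exists>ys. minimal_basis B (locmax B) (map \<phi> xs @ ys)"
  using assms unfolding basically_regular_def noetherian_local_ring_def local_hom_def by auto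

lemma hom_prod:
  assumes cA: "cring A" and cB: "cring B" and h: "\<phi> \<in> ring_hom A B" and lA: "local_ring A"
    and lB: "local_ring B" and hm: "\<phi> ` locmax A \<subseteq> locmax B"
    and x: "x \<in> ideal_prod A (locmax A) (locmax A)"
  shows "\<phi> x \<in> ideal_prod B (locmax B) (locmax B)"
  using x
proof (induct x rule: ideal_prod.induct)
  case (prod i j)
  have c: "i \<in> carrier A" "j \<in> carrier A" using prod local_carr[OF lA] by blast+
  have "\<phi> (i \<otimes>\<^bsub>A\<^esub> j) = \<phi> i \<otimes>\<^bsub>B\<^esub> \<phi> j" by (rule ring_hom_mult[OF h c])
  moreover have "\<phi> i \<in> locmax B" "\<phi> j \<in> locmax B" using prod hm by blast+
  ultimately show ?case using ideal_prod.prod by metis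
next
  case (sum s1 s2)
  interpret A: cring A by fact
  have "ideal_prod A (locmax A) (locmax A) \<subseteq> carrier A"
    by (rule A.ideal_prod_in_carrier[OF local_ideal[OF lA] local_ideal[OF lA]])
  hence c: "s1 \<in> carrier A" "s2 \<in> carrier A" using sum by blast+
  have "\<phi> (s1 \<oplus>\<^bsub>A\<^esub> s2) = \<phi> s1 \<oplus>\<^bsub>B\<^esub> \<phi> s2" by (rule ring_hom_add[OF h c])
  thus ?case using ideal_prod.sum sum by metis
qed

lemma quot_proj_eq: "quot_proj B J = a_r_coset B J"
  unfolding quot_proj_def by (rule ext) simp

lemma Bq_facts:
  assumes noe: "noetherian_ring B" and loc: "local_ring B"
  shows "ideal (ideal_prod B (locmax B) (locmax B)) B"
    "ideal_prod B (locmax B) (locmax B) \<subseteq> locmax B"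
    "cring (B Quot ideal_prod B (locmax B) (locmax B))"
    "local_ring (B Quot ideal_prod B (locmax B) (locmax B))"
    "locmax (B Quot ideal_prod B (locmax B) (locmax B)) = (a_r_coset B (ideal_prod B (locmax B) (locmax B))) ` locmax B"
    "noetherian_ring (B Quot ideal_prod B (locmax B) (locmax B))"
    "a_r_coset B (ideal_prod B (locmax B) (locmax B)) \<in> ring_hom B (B Quot ideal_prod B (locmax B) (locmax B))"
proof -
  interpret B: cring B using local_ring_cring[OF loc] .
  show i: "ideal (ideal_prod B (locmax B) (locmax B)) B"
    by (rule B.ideal_prod_is_ideal[OF local_ideal[OF loc] local_ideal[OF loc]])
  show s: "ideal_prod B (locmax B) (locmax B) \<subseteq> locmax B" by (rule B.prod_sub_max[OF loc])
  show "cring (B Quot ideal_prod B (locmax B) (locmax B))" by (rule B.quot_cring[OF i])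
  show "local_ring (B Quot ideal_prod B (locmax B) (locmax B))"
    "locmax (B Quot ideal_prod B (locmax B) (locmax B)) = (a_r_coset B (ideal_prod B (locmax B) (locmax B))) ` locmax B"
    using B.quot_local[OF loc i s] by simp_all
  show "noetherian_ring (B Quot ideal_prod B (locmax B) (locmax B))" by (rule B.quot_noetherian[OF noe i])
  show "a_r_coset B (ideal_prod B (locmax B) (locmax B)) \<in> ring_hom B (B Quot ideal_prod B (locmax B) (locmax B))"
    by (rule B.quot_hom[OF i])
qed

lemma part2_br:
  assumes br: "basically_regular A B \<phi>"
  shows "basically_regular A (B Quot ideal_prod B (locmax B) (locmax B))
        (quot_proj B (ideal_prod B (locmax B) (locmax B)) \<circ> \<phi>)"
proof -
  note f = br_unfold[OF br]
  note q = Bq_facts[OF f(3) f(4)]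
  interpret B: cring B using local_ring_cring[OF f(4)] .
  let ?n2 = "ideal_prod B (locmax B) (locmax B)"
  let ?p = "a_r_coset B ?n2"
  have pe: "quot_proj B ?n2 = ?p" by (rule quot_proj_eq)
  show ?thesis unfolding basically_regular_def noetherian_local_ring_def local_hom_def pe
  proof (intro conjI allI impI)
    show "noetherian_ring A" "local_ring A" using f by simp_all
    show "noetherian_ring (B Quot ?n2)" "local_ring (B Quot ?n2)" using q by simp_all
    show "?p \<circ> \<phi> \<in> ring_hom A (B Quot ?n2)" by (rule ring_hom_trans[OF f(5) q(7)])
    show "(?p \<circ> \<phi>) ` locmax A \<subseteq> locmax (B Quot ?n2)" unfolding q(5) using f(6) by auto
    fix xs assume "minimal_basis A (locmax A) xs"
    then obtain ys where ys: "minimal_basis B (locmax B) (map \<phi> xs @ ys)" using f(7) by blast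
    have c: "set (map \<phi> xs @ ys) \<subseteq> carrier B" using ys unfolding minimal_basis_def by blast
    have "minimal_basis (B Quot ?n2) (?p ` locmax B) (map ?p (map \<phi> xs @ ys))"
      using B.mb_transfer[OF f(3) f(4) q(1) subset_refl c] ys by simp
    hence "minimal_basis (B Quot ?n2) (locmax (B Quot ?n2)) (map (?p \<circ> \<phi>) xs @ map ?p ys)"
      unfolding q(5) by simp
    thus "\<exists>ys. minimal_basis (B Quot ?n2) (locmax (B Quot ?n2)) (map (?p \<circ> \<phi>) xs @ ys)" by blast
  qed (use f q in simp_all)
qed

lemma part2_nonflat:
  assumes br: "basically_regular A B \<phi>" and na: "\<not> artinian A"
  shows "\<not> flat_hom A (B Quot ideal_prod B (locmax B) (locmax B))
        (quot_proj B (ideal_prod B (locmax B) (locmax B)) \<circ> \<phi>)"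
proof
  note f = br_unfold[OF br]
  note q = Bq_facts[OF f(3) f(4)]
  interpret A: cring A using local_ring_cring[OF f(2)] .
  interpret B: cring B using local_ring_cring[OF f(4)] .
  let ?n2 = "ideal_prod B (locmax B) (locmax B)"
  let ?p = "a_r_coset B ?n2"
  let ?Q = "B Quot ?n2"
  interpret Q: cring ?Q by (rule q(3))
  have pe: "quot_proj B ?n2 = ?p" by (rule quot_proj_eq)
  assume fl0: "flat_hom A ?Q (quot_proj B ?n2 \<circ> \<phi>)"
  hence fl: "flat_hom A ?Q (?p \<circ> \<phi>)" unfolding pe .
  have fh: "?p \<circ> \<phi> \<in> ring_hom A ?Q" by (rule ring_hom_trans[OF f(5) q(7)])
  have sqz: "x = \<zero>\<^bsub>A\<^esub>" if x: "x \<in> ideal_prod A (locmax A) (locmax A)" for x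
  proof -
    have xc: "x \<in> carrier A"
      using x A.ideal_prod_in_carrier[OF local_ideal[OF f(2)] local_ideal[OF f(2)]] by blast
    have "\<phi> x \<in> ?n2" by (rule hom_prod[OF A.is_cring B.is_cring f(5) f(2) f(4) f(6) x])
    hence fx: "(?p \<circ> \<phi>) x = \<zero>\<^bsub>?Q\<^esub>"
      using B.quot_eq_zero_iff[OF q(1)] ring_hom_closed[OF f(5) xc] by (simp add: B.quot_zero)
    have fxc: "(?p \<circ> \<phi>) x \<in> carrier ?Q" by (rule ring_hom_closed[OF fh xc])
    have hyp: "(\<forall>i < (1::nat). (\<lambda>i. x) i \<in> carrier A \<and> (\<lambda>i. \<one>\<^bsub>?Q\<^esub>) i \<in> carrier ?Q) \<and>
       finsum ?Q (\<lambda>i. (?p \<circ> \<phi>) ((\<lambda>i. x) i) \<otimes>\<^bsub>?Q\<^esub> (\<lambda>i. \<one>\<^bsub>?Q\<^esub>) i) {..<1} = \<zero>\<^bsub>?Q\<^esub>"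
      using Q.finsum_one_elem[of "\<lambda>i. (?p \<circ> \<phi>) x \<otimes>\<^bsub>?Q\<^esub> \<one>\<^bsub>?Q\<^esub>"] fxc fx xc by simp
    have ex: "\<exists>(l::nat) (c :: nat \<Rightarrow> nat \<Rightarrow> 'a) y. (\<forall>i < (1::nat). \<forall>j < l. c i j \<in> carrier A) \<and> (\<forall>j < l. y j \<in> carrier ?Q) \<and>
      (\<forall>i < (1::nat). \<one>\<^bsub>?Q\<^esub> = finsum ?Q (\<lambda>j. (?p \<circ> \<phi>) (c i j) \<otimes>\<^bsub>?Q\<^esub> y j) {..<l}) \<and>
      (\<forall>j < l. finsum A (\<lambda>i. x \<otimes>\<^bsub>A\<^esub> c i j) {..<1} = \<zero>\<^bsub>A\<^esub>)"
      using mp[OF spec[OF spec[OF spec[OF fl[unfolded flat_hom_def], of 1], of "\<lambda>i. x"], of "\<lambda>i. \<one>\<^bsub>?Q\<^esub>"] hyp]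
      by (simp only:)
    from ex show ?thesis
    proof (elim exE conjE)
    fix l :: nat and c :: "nat \<Rightarrow> nat \<Rightarrow> 'a" and y
    assume cl: "\<forall>i < (1::nat). \<forall>j < l. c i j \<in> carrier A" and yl: "\<forall>j < l. y j \<in> carrier ?Q"
      and e1: "\<forall>i < (1::nat). \<one>\<^bsub>?Q\<^esub> = finsum ?Q (\<lambda>j. (?p \<circ> \<phi>) (c i j) \<otimes>\<^bsub>?Q\<^esub> y j) {..<l}"
      and e2: "\<forall>j < l. finsum A (\<lambda>i. x \<otimes>\<^bsub>A\<^esub> c i j) {..<1} = \<zero>\<^bsub>A\<^esub>"
    have cc: "\<And>j. j < l \<Longrightarrow> c 0 j \<in> carrier A" using cl by simp
    have z: "\<And>j. j < l \<Longrightarrow> x \<otimes>\<^bsub>A\<^esub> c 0 j = \<zero>\<^bsub>A\<^esub>"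
    proof -
      fix j assume j: "j < l"
      have "finsum A (\<lambda>i. x \<otimes>\<^bsub>A\<^esub> c i j) {..<1} = x \<otimes>\<^bsub>A\<^esub> c 0 j"
        by (rule A.finsum_one_elem) (use xc cc[OF j] in simp)
      thus "x \<otimes>\<^bsub>A\<^esub> c 0 j = \<zero>\<^bsub>A\<^esub>" using e2 j by simp
    qed
    show ?thesis
    proof (cases "\<exists>j<l. c 0 j \<notin> locmax A")
      case True
      then obtain j where j: "j < l" "c 0 j \<notin> locmax A" by blast
      have u: "c 0 j \<in> Units A" by (rule A.local_unit[OF f(2) cc[OF j(1)] j(2)])
      have "x = (x \<otimes>\<^bsub>A\<^esub> c 0 j) \<otimes>\<^bsub>A\<^esub> inv\<^bsub>A\<^esub> (c 0 j)"
        using u xc cc[OF j(1)] by (simp add: A.m_assoc)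
      thus ?thesis using z[OF j(1)] u by simp
    next
      case False
      have "finsum ?Q (\<lambda>j. (?p \<circ> \<phi>) (c 0 j) \<otimes>\<^bsub>?Q\<^esub> y j) {..<l} \<in> locmax ?Q"
      proof (rule Q.finsum_in_ideal[OF local_ideal[OF q(4)]], simp, intro ballI)
        fix j assume "j \<in> {..<l}"
        hence j: "j < l" by simp
        have "c 0 j \<in> locmax A" using False j by blast
        hence cm: "(?p \<circ> \<phi>) (c 0 j) \<in> locmax ?Q" unfolding q(5) using f(6) by auto
        show "(?p \<circ> \<phi>) (c 0 j) \<otimes>\<^bsub>?Q\<^esub> y j \<in> locmax ?Q"
          using ideal.I_r_closed[OF local_ideal[OF q(4)] cm] yl j by simp
      qed
      hence "\<one>\<^bsub>?Q\<^esub> \<in> locmax ?Q" using e1 by simp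
      thus ?thesis using local_one_notin[OF q(4)] by simp
    qed
    qed
  qed
  have "\<forall>a\<in>locmax A. \<forall>b\<in>locmax A. a \<otimes>\<^bsub>A\<^esub> b = \<zero>\<^bsub>A\<^esub>"
  proof (intro ballI)
    fix a b assume "a \<in> locmax A" "b \<in> locmax A"
    hence "a \<otimes>\<^bsub>A\<^esub> b \<in> ideal_prod A (locmax A) (locmax A)" by (rule ideal_prod.prod)
    thus "a \<otimes>\<^bsub>A\<^esub> b = \<zero>\<^bsub>A\<^esub>" by (rule sqz)
  qed
  hence "artinian A" by (rule A.artinian_of_sq[OF f(1) f(2)])
  thus False using na by simp
qed

lemma psi_eq:
  assumes br: "basically_regular A B \<phi>" and I: "ideal I A"
    and Im: "I \<subseteq> ideal_prod A (locmax A) (locmax A)" and a: "a \<in> carrier A"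
  shows "induced_hom A B \<phi> I (ideal_prod B (locmax B) (locmax B)) (I +>\<^bsub>A\<^esub> a)
         = ideal_prod B (locmax B) (locmax B) +>\<^bsub>B\<^esub> \<phi> a"
proof -
  note f = br_unfold[OF br]
  note q = Bq_facts[OF f(3) f(4)]
  interpret A: cring A using local_ring_cring[OF f(2)] .
  interpret B: cring B using local_ring_cring[OF f(4)] .
  interpret H: ring_hom_cring A B \<phi>
    by (intro ring_hom_cring.intro ring_hom_cring_axioms.intro A.is_cring B.is_cring f(5))
  let ?n2 = "ideal_prod B (locmax B) (locmax B)"
  let ?r = "SOME b. b \<in> I +>\<^bsub>A\<^esub> a"
  have r: "?r \<in> carrier A" "I +>\<^bsub>A\<^esub> ?r = I +>\<^bsub>A\<^esub> a"
    using A.quot_rep[OF I A.quot_in[OF I a]] by simp_all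
  have "?r \<ominus>\<^bsub>A\<^esub> a \<in> I" using A.quot_eq_iff[OF I r(1) a] r(2) by simp
  hence "?r \<ominus>\<^bsub>A\<^esub> a \<in> ideal_prod A (locmax A) (locmax A)" using Im by blast
  hence "\<phi> (?r \<ominus>\<^bsub>A\<^esub> a) \<in> ?n2" by (rule hom_prod[OF A.is_cring B.is_cring f(5) f(2) f(4) f(6)])
  moreover have "\<phi> (?r \<ominus>\<^bsub>A\<^esub> a) = \<phi> ?r \<ominus>\<^bsub>B\<^esub> \<phi> a"
    using r(1) a by (simp add: a_minus_def)
  ultimately have "\<phi> ?r \<ominus>\<^bsub>B\<^esub> \<phi> a \<in> ?n2" by simp
  hence "?n2 +>\<^bsub>B\<^esub> \<phi> ?r = ?n2 +>\<^bsub>B\<^esub> \<phi> a"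
    using B.quot_eq_iff[OF q(1)] r(1) a by simp
  thus ?thesis unfolding induced_hom_def by simp
qed

lemma part1_br:
  assumes br: "basically_regular A B \<phi>" and I: "ideal I A"
    and Im: "I \<subseteq> ideal_prod A (locmax A) (locmax A)"
  shows "basically_regular (A Quot I) (B Quot ideal_prod B (locmax B) (locmax B))
           (induced_hom A B \<phi> I (ideal_prod B (locmax B) (locmax B)))"
proof -
  note f = br_unfold[OF br]
  note q = Bq_facts[OF f(3) f(4)]
  interpret A: cring A using local_ring_cring[OF f(2)] .
  interpret B: cring B using local_ring_cring[OF f(4)] .
  let ?n2 = "ideal_prod B (locmax B) (locmax B)"
  let ?p = "a_r_coset B ?n2"
  let ?Q = "B Quot ?n2"
  let ?Aq = "A Quot I"
  let ?psi = "induced_hom A B \<phi> I ?n2"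
  interpret Q: cring ?Q by (rule q(3))
  have Im': "I \<subseteq> locmax A" using Im A.prod_sub_max[OF f(2)] by blast
  have aq: "local_ring ?Aq" "locmax ?Aq = (a_r_coset A I) ` locmax A"
    using A.quot_local[OF f(2) I Im'] by simp_all
  have aqn: "noetherian_ring ?Aq" by (rule A.quot_noetherian[OF f(1) I])
  have ps: "\<And>a. a \<in> carrier A \<Longrightarrow> ?psi (I +>\<^bsub>A\<^esub> a) = ?p (\<phi> a)"
    using psi_eq[OF br I Im] by simp
  have hom: "?psi \<in> ring_hom ?Aq ?Q"
  proof (rule ring_hom_memI)
    fix C assume "C \<in> carrier ?Aq"
    then obtain a where a: "a \<in> carrier A" "C = I +>\<^bsub>A\<^esub> a" using A.quot_elem[OF I] by blast
    show "?psi C \<in> carrier ?Q" using a ps B.quot_in[OF q(1)] ring_hom_closed[OF f(5)] by simp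
  next
    fix C D assume "C \<in> carrier ?Aq" "D \<in> carrier ?Aq"
    then obtain a b where a: "a \<in> carrier A" "C = I +>\<^bsub>A\<^esub> a" and b: "b \<in> carrier A" "D = I +>\<^bsub>A\<^esub> b"
      using A.quot_elem[OF I] by metis
    have "C \<otimes>\<^bsub>?Aq\<^esub> D = I +>\<^bsub>A\<^esub> (a \<otimes>\<^bsub>A\<^esub> b)" using a b A.quot_mult[OF I] by simp
    hence "?psi (C \<otimes>\<^bsub>?Aq\<^esub> D) = ?p (\<phi> a \<otimes>\<^bsub>B\<^esub> \<phi> b)"
      using ps a b ring_hom_mult[OF f(5)] by simp
    also have "... = ?p (\<phi> a) \<otimes>\<^bsub>?Q\<^esub> ?p (\<phi> b)"
      using B.quot_mult[OF q(1)] ring_hom_closed[OF f(5)] a b by simp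
    finally show "?psi (C \<otimes>\<^bsub>?Aq\<^esub> D) = ?psi C \<otimes>\<^bsub>?Q\<^esub> ?psi D" using ps a b by simp
  next
    fix C D assume "C \<in> carrier ?Aq" "D \<in> carrier ?Aq"
    then obtain a b where a: "a \<in> carrier A" "C = I +>\<^bsub>A\<^esub> a" and b: "b \<in> carrier A" "D = I +>\<^bsub>A\<^esub> b"
      using A.quot_elem[OF I] by metis
    have "C \<oplus>\<^bsub>?Aq\<^esub> D = I +>\<^bsub>A\<^esub> (a \<oplus>\<^bsub>A\<^esub> b)" using a b A.quot_add[OF I] by simp
    hence "?psi (C \<oplus>\<^bsub>?Aq\<^esub> D) = ?p (\<phi> a \<oplus>\<^bsub>B\<^esub> \<phi> b)"
      using ps a b ring_hom_add[OF f(5)] by simp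
    also have "... = ?p (\<phi> a) \<oplus>\<^bsub>?Q\<^esub> ?p (\<phi> b)"
      using B.quot_add[OF q(1)] ring_hom_closed[OF f(5)] a b by simp
    finally show "?psi (C \<oplus>\<^bsub>?Aq\<^esub> D) = ?psi C \<oplus>\<^bsub>?Q\<^esub> ?psi D" using ps a b by simp
  next
    have "?psi \<one>\<^bsub>?Aq\<^esub> = ?p (\<phi> \<one>\<^bsub>A\<^esub>)" using ps[OF A.one_closed] by (simp add: A.quot_one)
    thus "?psi \<one>\<^bsub>?Aq\<^esub> = \<one>\<^bsub>?Q\<^esub>" using ring_hom_one[OF f(5)] by (simp add: B.quot_one)
  qed
  have img: "?psi ` locmax ?Aq = ?p ` \<phi> ` locmax A"
  proof -
    have "?psi ` locmax ?Aq = (\<lambda>a. ?psi (I +>\<^bsub>A\<^esub> a)) ` locmax A" unfolding aq(2) by (simp add: image_image)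
    also have "... = (\<lambda>a. ?p (\<phi> a)) ` locmax A"
      using ps local_carr[OF f(2)] by (intro image_cong) auto
    finally show ?thesis by (simp add: image_image)
  qed
  show ?thesis unfolding basically_regular_def noetherian_local_ring_def local_hom_def
  proof (intro conjI allI impI)
    show "noetherian_ring ?Aq" "local_ring ?Aq" using aqn aq by simp_all
    show "noetherian_ring ?Q" "local_ring ?Q" using q by simp_all
    show "?psi \<in> ring_hom ?Aq ?Q" by (rule hom)
    show "?psi ` locmax ?Aq \<subseteq> locmax ?Q" unfolding img q(5) using f(6) by auto
    fix Cs assume Cs: "minimal_basis ?Aq (locmax ?Aq) Cs"
    have Cc: "set Cs \<subseteq> carrier ?Aq" using Cs unfolding minimal_basis_def by blast
    define xs where "xs = map (\<lambda>C. SOME a. a \<in> C) Cs"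
    have xc: "set xs \<subseteq> carrier A" unfolding xs_def using Cc A.quot_rep[OF I] by auto
    have mx: "map (a_r_coset A I) xs = Cs" unfolding xs_def map_map
      by (rule map_idI) (use Cc A.quot_rep[OF I] in auto)
    have "minimal_basis A (locmax A) xs"
      using A.mb_transfer[OF f(1) f(2) I Im xc] Cs unfolding mx aq(2) by simp
    then obtain ys where ys: "minimal_basis B (locmax B) (map \<phi> xs @ ys)" using f(7) by blast
    have c: "set (map \<phi> xs @ ys) \<subseteq> carrier B" using ys unfolding minimal_basis_def by blast
    have "minimal_basis ?Q (?p ` locmax B) (map ?p (map \<phi> xs @ ys))"
      using B.mb_transfer[OF f(3) f(4) q(1) subset_refl c] ys by simp
    moreover have "map ?psi Cs = map ?p (map \<phi> xs)" unfolding xs_def induced_hom_def by simp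
    ultimately have "minimal_basis ?Q (locmax ?Q) (map ?psi Cs @ map ?p ys)"
      unfolding q(5) by simp
    thus "\<exists>ys. minimal_basis ?Q (locmax ?Q) (map ?psi Cs @ ys)" by blast
  qed (use aq q in simp_all)
qed

lemma psi_img:
  assumes br: "basically_regular A B \<phi>" and I: "ideal I A"
    and Im: "I \<subseteq> ideal_prod A (locmax A) (locmax A)"
  shows "induced_hom A B \<phi> I (ideal_prod B (locmax B) (locmax B)) ` locmax (A Quot I)
     = a_r_coset B (ideal_prod B (locmax B) (locmax B)) ` \<phi> ` locmax A"
proof -
  note f = br_unfold[OF br]
  interpret A: cring A using local_ring_cring[OF f(2)] .
  let ?n2 = "ideal_prod B (locmax B) (locmax B)"
  let ?p = "a_r_coset B ?n2"
  let ?psi = "induced_hom A B \<phi> I ?n2"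
  have Im': "I \<subseteq> locmax A" using Im A.prod_sub_max[OF f(2)] by blast
  have aq: "locmax (A Quot I) = (a_r_coset A I) ` locmax A"
    using A.quot_local[OF f(2) I Im'] by simp_all
  have ps: "\<And>a. a \<in> carrier A \<Longrightarrow> ?psi (I +>\<^bsub>A\<^esub> a) = ?p (\<phi> a)"
    using psi_eq[OF br I Im] by simp
  have "?psi ` locmax (A Quot I) = (\<lambda>a. ?psi (I +>\<^bsub>A\<^esub> a)) ` locmax A" unfolding aq by (simp add: image_image)
  also have "... = (\<lambda>a. ?p (\<phi> a)) ` locmax A"
    using ps local_carr[OF f(2)] by (intro image_cong) auto
  finally show ?thesis by (simp add: image_image)
qed

lemma fibre1:
  assumes br: "basically_regular A B \<phi>" and I: "ideal I A"
    and Im: "I \<subseteq> ideal_prod A (locmax A) (locmax A)" and ne: "genideal B (\<phi> ` locmax A) \<noteq> locmax B"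
  shows "\<not> regular_local_ring
             (fibre_ring (A Quot I) (B Quot ideal_prod B (locmax B) (locmax B))
                (induced_hom A B \<phi> I (ideal_prod B (locmax B) (locmax B))))"
proof -
  note f = br_unfold[OF br]
  interpret B: cring B using local_ring_cring[OF f(4)] .
  show ?thesis unfolding fibre_ring_def psi_img[OF br I Im]
    by (rule B.fibre_not_regular[OF f(3) f(4) f(6) ne])
qed

lemma fibre2:
  assumes br: "basically_regular A B \<phi>" and ne: "genideal B (\<phi> ` locmax A) \<noteq> locmax B"
  shows "\<not> regular_local_ring
             (fibre_ring A (B Quot ideal_prod B (locmax B) (locmax B))
                (quot_proj B (ideal_prod B (locmax B) (locmax B)) \<circ> \<phi>))"
proof -
  note f = br_unfold[OF br]
  interpret B: cring B using local_ring_cring[OF f(4)] .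
  show ?thesis unfolding fibre_ring_def quot_proj_eq image_comp[symmetric]
    by (rule B.fibre_not_regular[OF f(3) f(4) f(6) ne])
qed

theorem proposition4p1:
  fixes A :: "'a ring" and B :: "'b ring" and \<phi> :: "'a \<Rightarrow> 'b"
  assumes br: "basically_regular A B \<phi>"
  shows
   "(genideal B (\<phi> ` locmax A) \<noteq> locmax B \<longrightarrow>
      (\<forall>I. ideal I A \<and> I \<subseteq> ideal_prod A (locmax A) (locmax A) \<longrightarrow>
         basically_regular (A Quot I) (B Quot ideal_prod B (locmax B) (locmax B))
           (induced_hom A B \<phi> I (ideal_prod B (locmax B) (locmax B))) \<and>
         \<not> regular_local_ring
             (fibre_ring (A Quot I) (B Quot ideal_prod B (locmax B) (locmax B))
                (induced_hom A B \<phi> I (ideal_prod B (locmax B) (locmax B))))))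
    \<and>
    (\<not> artinian A \<longrightarrow>
      basically_regular A (B Quot ideal_prod B (locmax B) (locmax B))
        (quot_proj B (ideal_prod B (locmax B) (locmax B)) \<circ> \<phi>) \<and>
      \<not> flat_hom A (B Quot ideal_prod B (locmax B) (locmax B))
        (quot_proj B (ideal_prod B (locmax B) (locmax B)) \<circ> \<phi>) \<and>
      (genideal B (\<phi> ` locmax A) \<noteq> locmax B \<longrightarrow>
         \<not> regular_local_ring
             (fibre_ring A (B Quot ideal_prod B (locmax B) (locmax B))
                (quot_proj B (ideal_prod B (locmax B) (locmax B)) \<circ> \<phi>))))"
  using part1_br[OF br] fibre1[OF br] part2_br[OF br] part2_nonflat[OF br] fibre2[OF br]
  by blast

end
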